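(* Let $A$ be a nonempty finite set of positive integers, let $n$ be a positive integer, and let $\alpha,\beta$ be positive integers with $\alpha\le\beta\le|A|$. Then: (a) If $\binom{|A|}{\alpha}=\sum_{d=1}^{\sup A}\mu(d)\binom{v(A,d)}{\alpha}$, then $\binom{|A|}{\beta}=\sum_{d=1}^{\sup A}\mu(d)\binom{v(A,d)}{\beta}$. (b) If $\binom{|A|}{\alpha}=\sum_{d\mid n}\mu(d)\binom{v(A,d)}{\alpha}$, then $\binom{|A|}{\beta}=\sum_{d\mid n}\mu(d)\binom{v(A,d)}{\beta}$. (c) If $\sum_{d=1}^{\sup A}\mu(d)\binom{v(A,d)}{\beta}=0$, then $\sum_{d=1}^{\sup A}\mu(d)\binom{v(A,d)}{\alpha}=0$. (d) If $\sum_{d\mid n}\mu(d)\binom{v(A,d)}{\beta}=0$, then $\sum_{d\mid n}\mu(d)\binom{v(A,d)}{\alpha}=0$.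
   Context: $\sup A$ is the largest element of $A$. $\mu$ is the Möbius function. For a positive integer $d$, $v(A,d)$ is the number of multiples of $d$ in $A$. Binomial coefficients $\binom{m}{k}$ are $0$ when $k>m$. *)

theory Defs
  imports "HOL-Computational_Algebra.Computational_Algebra"
begin

text \<open>The Moebius function on positive integers (value 0 at 0, which never occurs below).\<close>
definition moebius_mu :: "nat \<Rightarrow> int" where
  "moebius_mu d = (if d = 0 then 0
     else if squarefree d then (-1) ^ card (prime_factors d) else 0)"

definition v :: "nat set \<Rightarrow> nat \<Rightarrow> nat" where
  "v A d = card {a \<in> A. d dvd a}"

end

theory Submission
  imports Defs
begin

lemma alt_sum:
  fixes P :: "'a set"
  assumes "finite P" "P \<noteq> {}"
  shows "(\<Sum>S\<in>Pow P. (-1::int) ^ card S) = 0"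
proof -
  obtain p where p: "p \<in> P" using assms by auto
  define Q where "Q = P - {p}"
  have fQ: "finite Q" using assms Q_def by auto
  have PQ: "P = insert p Q" and pQ: "p \<notin> Q" using p Q_def by auto
  have "Pow P = Pow Q \<union> insert p ` Pow Q" unfolding PQ by (rule Pow_insert)
  moreover have "Pow Q \<inter> insert p ` Pow Q = {}" using pQ by auto
  ultimately have "(\<Sum>S\<in>Pow P. (-1::int) ^ card S) = (\<Sum>S\<in>Pow Q. (-1::int) ^ card S) + (\<Sum>S\<in>insert p ` Pow Q. (-1::int) ^ card S)"
    using fQ by (simp add: sum.union_disjoint)
  also have "(\<Sum>S\<in>insert p ` Pow Q. (-1::int) ^ card S) = (\<Sum>S\<in>Pow Q. (-1::int) ^ card (insert p S))"
  proof (rule sum.reindex[unfolded comp_def])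
    show "inj_on (insert p) (Pow Q)" unfolding inj_on_def
    proof (intro ballI impI)
      fix x y assume "x \<in> Pow Q" "y \<in> Pow Q" "insert p x = insert p y"
      then show "x = y" using pQ by (auto simp: insert_ident)
    qed
  qed
  also have "\<dots> = (\<Sum>S\<in>Pow Q. - ((-1::int) ^ card S))"
  proof (rule sum.cong[OF refl])
    fix S assume "S \<in> Pow Q"
    then have "finite S" "p \<notin> S" using fQ pQ finite_subset by auto
    then show "(-1::int) ^ card (insert p S) = - ((-1::int) ^ card S)" by simp
  qed
  finally show ?thesis by (simp add: sum_negf)
qed

lemma prod_primes_dvd:
  fixes m :: nat
  assumes "finite S" "\<forall>p\<in>S. prime p \<and> p dvd m"
  shows "\<Prod>S dvd m"
  using assms
proof (induction S rule: finite_induct)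
  case empty then show ?case by simp
next
  case (insert p S)
  have "coprime p (\<Prod>S)"
    using insert(2,4) by (intro prod_coprime_right primes_coprime) auto
  then show ?case using insert by (simp add: divides_mult)
qed

lemma sqf_pos: "squarefree (d::nat) \<Longrightarrow> 0 < d" by (cases d) auto

lemma sqf_prod:
  fixes d :: nat
  assumes "squarefree d"
  shows "\<Prod>(prime_factors d) = d"
proof -
  have d0: "d \<noteq> 0" using sqf_pos assms by auto
  have "d = (\<Prod>p\<in>prime_factors d. p ^ multiplicity p d)"
    using prod_prime_factors[OF d0] by simp
  also have "\<dots> = \<Prod>(prime_factors d)"
    using assms d0 by (intro prod.cong) (auto simp: squarefree_factorial_semiring')
  finally show ?thesis by simp
qed

lemma pf_prod:
  fixes S :: "nat set"
  assumes "finite S" "\<forall>p\<in>S. prime p"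
  shows "prime_factors (\<Prod>S) = S"
proof -
  have "prime_factors (prod id S) = \<Union>((prime_factors \<circ> id) ` S)"
    using assms by (intro prime_factors_prod) auto
  also have "\<dots> = S" using assms by (auto simp: prime_prime_factors)
  finally show ?thesis by simp
qed

lemma mu_sum:
  fixes m :: nat
  assumes "m > 0"
  shows "(\<Sum>d | d dvd m. moebius_mu d) = (if m = 1 then 1 else 0)"
proof -
  have fin: "finite {d. d dvd m}" using assms by simp
  have "(\<Sum>d | d dvd m. moebius_mu d) = (\<Sum>d | d dvd m \<and> squarefree d. moebius_mu d)"
    using fin by (intro sum.mono_neutral_right) (auto simp: moebius_mu_def sqf_pos)
  also have "\<dots> = (\<Sum>d | d dvd m \<and> squarefree d. (-1::int) ^ card (prime_factors d))"
    by (intro sum.cong) (auto simp: moebius_mu_def dest: sqf_pos)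
  also have "\<dots> = (\<Sum>S\<in>Pow (prime_factors m). (-1::int) ^ card S)"
  proof (rule sum.reindex_bij_witness[where i = "\<lambda>S. \<Prod>S" and j = prime_factors])
    fix S assume S: "S \<in> Pow (prime_factors m)"
    then have fS: "finite S" using finite_subset by blast
    have pS: "\<forall>p\<in>S. prime p \<and> p dvd m" using S by (auto simp: prime_factors_dvd)
    show "prime_factors (\<Prod>S) = S" using pf_prod fS pS by blast
    have "\<Prod>S dvd m" using prod_primes_dvd fS pS by blast
    moreover have "squarefree (\<Prod>S)"
      using pS by (intro squarefree_prod_coprime) (auto simp: primes_coprime squarefree_prime)
    ultimately show "\<Prod>S \<in> {d. d dvd m \<and> squarefree d}" by simp
  next
    fix d assume d: "d \<in> {d. d dvd m \<and> squarefree d}"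
    show "\<Prod>(prime_factors d) = d" using d sqf_prod by auto
    have "d \<noteq> 0" using d sqf_pos by fastforce
    then show "prime_factors d \<in> Pow (prime_factors m)"
      using d assms by (auto simp: prime_factors_dvd intro: dvd_trans)
    show "(-1::int) ^ card (prime_factors d) = (-1) ^ card (prime_factors d)" by simp
  qed
  also have "\<dots> = (if m = 1 then 1 else 0)"
  proof (cases "m = 1")
    case True then show ?thesis by simp
  next
    case False
    then have "prime_factors m \<noteq> {}" using assms
      by (simp add: prime_factorization_empty_iff)
    then have "(\<Sum>S\<in>Pow (prime_factors m). (-1::int) ^ card S) = 0" by (intro alt_sum) auto
    then show ?thesis using False by simp
  qed
  finally show ?thesis .
qed


lemma count_lemma:
  fixes A D :: "nat set" and P :: "nat set \<Rightarrow> bool"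
  assumes "finite A" "finite D"
    and H: "\<And>X. X \<subseteq> A \<Longrightarrow> card X = k \<Longrightarrow>
      (\<Sum>d\<in>D. moebius_mu d * (if \<forall>x\<in>X. d dvd x then 1 else 0)) = (if P X then 1 else 0)"
  shows "(\<Sum>d\<in>D. moebius_mu d * int (v A d choose k)) = int (card {X. X \<subseteq> A \<and> card X = k \<and> P X})"
proof -
  let ?K = "{X. X \<subseteq> A \<and> card X = k}"
  have fK: "finite ?K" by (rule finite_subset[of _ "Pow A"]) (auto simp: assms(1))
  have c: "int (v A d choose k) = (\<Sum>X\<in>?K. if \<forall>x\<in>X. d dvd x then 1 else 0)" for d
  proof -
    have "v A d choose k = card {X. X \<subseteq> {a\<in>A. d dvd a} \<and> card X = k}"
      unfolding v_def using assms(1) by (simp add: n_subsets)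
    also have "{X. X \<subseteq> {a\<in>A. d dvd a} \<and> card X = k} = {X\<in>?K. \<forall>x\<in>X. d dvd x}" by auto
    finally show ?thesis using fK by (simp add: sum.If_cases Int_def conj_assoc)
  qed
  have "(\<Sum>d\<in>D. moebius_mu d * int (v A d choose k))
      = (\<Sum>d\<in>D. \<Sum>X\<in>?K. moebius_mu d * (if \<forall>x\<in>X. d dvd x then 1 else 0))"
    by (simp add: c sum_distrib_left)
  also have "\<dots> = (\<Sum>X\<in>?K. \<Sum>d\<in>D. moebius_mu d * (if \<forall>x\<in>X. d dvd x then 1 else 0))"
    by (rule sum.swap)
  also have "\<dots> = (\<Sum>X\<in>?K. if P X then 1 else 0)"
  proof (rule sum.cong[OF refl])
    fix X assume "X \<in> ?K"
    then show "(\<Sum>d\<in>D. moebius_mu d * (if \<forall>x\<in>X. d dvd x then 1 else 0)) = (if P X then 1 else 0)"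
      using H by simp
  qed
  also have "\<dots> = int (card {X. X \<subseteq> A \<and> card X = k \<and> P X})"
    using fK by (simp add: sum.If_cases Int_def conj_assoc)
  finally show ?thesis .
qed

lemma final_lemma:
  fixes A :: "nat set" and P :: "nat set \<Rightarrow> bool"
  assumes fA: "finite A" and ab: "\<alpha> \<le> \<beta>" "\<beta> \<le> card A"
    and mono': "\<forall>X Y. X \<subseteq> Y \<longrightarrow> Y \<subseteq> A \<longrightarrow> P X \<longrightarrow> P Y"
  shows "(card {X. X \<subseteq> A \<and> card X = \<alpha> \<and> P X} = card A choose \<alpha> \<longrightarrow>
           card {X. X \<subseteq> A \<and> card X = \<beta> \<and> P X} = card A choose \<beta>)
       \<and> (card {X. X \<subseteq> A \<and> card X = \<beta> \<and> P X} = 0 \<longrightarrow>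
           card {X. X \<subseteq> A \<and> card X = \<alpha> \<and> P X} = 0)"
proof -
  have mono: "P Y" if "X \<subseteq> Y" "Y \<subseteq> A" "P X" for X Y using mono' that by blast
  show ?thesis
proof (intro conjI impI)
  have fK: "finite {X. X \<subseteq> A \<and> card X = k}" for k
    by (rule finite_subset[of _ "Pow A"]) (auto simp: fA)
  {
    assume h: "card {X. X \<subseteq> A \<and> card X = \<alpha> \<and> P X} = card A choose \<alpha>"
    have eq: "{X. X \<subseteq> A \<and> card X = \<alpha> \<and> P X} = {X. X \<subseteq> A \<and> card X = \<alpha>}"
      by (rule card_subset_eq[OF fK]) (use h n_subsets[OF fA, of \<alpha>] in auto)
    have "{X. X \<subseteq> A \<and> card X = \<beta> \<and> P X} = {X. X \<subseteq> A \<and> card X = \<beta>}"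
    proof (intro set_eqI iffI)
      fix Y assume Y: "Y \<in> {X. X \<subseteq> A \<and> card X = \<beta>}"
      have "\<alpha> \<le> card Y" using Y ab by simp
      then obtain X where X: "X \<subseteq> Y" "card X = \<alpha>" "finite X"
        by (rule obtain_subset_with_card_n)
      then have "X \<in> {X. X \<subseteq> A \<and> card X = \<alpha>}" using Y by auto
      then have "P X" using eq by blast
      then show "Y \<in> {X. X \<subseteq> A \<and> card X = \<beta> \<and> P X}" using mono[OF X(1) _ \<open>P X\<close>] Y by simp
    next
      fix Y assume "Y \<in> {X. X \<subseteq> A \<and> card X = \<beta> \<and> P X}"
      then show "Y \<in> {X. X \<subseteq> A \<and> card X = \<beta>}" by simp
    qed
    then show "card {X. X \<subseteq> A \<and> card X = \<beta> \<and> P X} = card A choose \<beta>"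
      using fA by (simp add: n_subsets)
  }
  {
    assume h: "card {X. X \<subseteq> A \<and> card X = \<beta> \<and> P X} = 0"
    then have e: "{X. X \<subseteq> A \<and> card X = \<beta> \<and> P X} = {}"
    proof -
      have "finite {X. X \<subseteq> A \<and> card X = \<beta> \<and> P X}"
        by (rule finite_subset[OF _ fK[of \<beta>]]) auto
      then show ?thesis using h by simp
    qed
    have "{X. X \<subseteq> A \<and> card X = \<alpha> \<and> P X} = {}"
    proof (rule ccontr)
      assume "{X. X \<subseteq> A \<and> card X = \<alpha> \<and> P X} \<noteq> {}"
      then obtain X where X: "X \<subseteq> A" "card X = \<alpha>" "P X" by auto
      have "\<beta> - \<alpha> \<le> card (A - X)" using X ab fA finite_subset[OF X(1) fA] by (simp add: card_Diff_subset)
      then obtain Z where Z: "Z \<subseteq> A - X" "card Z = \<beta> - \<alpha>" "finite Z"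
        by (rule obtain_subset_with_card_n)
      have "card (X \<union> Z) = \<beta>"
        using Z X ab fA finite_subset[OF X(1) fA] by (subst card_Un_disjoint) auto
      moreover have "X \<union> Z \<subseteq> A" using X Z by auto
      moreover have "P (X \<union> Z)" by (rule mono[OF _ \<open>X \<union> Z \<subseteq> A\<close> X(3)]) blast
      ultimately show False using e by blast
    qed
    then show "card {X. X \<subseteq> A \<and> card X = \<alpha> \<and> P X} = 0" by (metis card.empty)
  }
qed
qed


lemma helper:
  fixes D :: "nat set" and g :: nat
  assumes "finite D" "g > 0" "\<And>d. d dvd g \<Longrightarrow> d \<in> D" "\<And>d. d \<in> D \<Longrightarrow> Q d \<longleftrightarrow> d dvd g"
  shows "(\<Sum>d\<in>D. moebius_mu d * (if Q d then 1 else 0)) = (if g = 1 then 1 else 0)"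
proof -
  have "(\<Sum>d\<in>D. moebius_mu d * (if Q d then 1 else 0)) = (\<Sum>d\<in>D. if d dvd g then moebius_mu d else 0)"
    using assms(4) by (intro sum.cong refl) auto
  also have "\<dots> = (\<Sum>d\<in>{d\<in>D. d dvd g}. moebius_mu d)"
    using assms(1) by (simp add: sum.inter_filter)
  also have "{d\<in>D. d dvd g} = {d. d dvd g}" using assms(3) by auto
  also have "(\<Sum>d\<in>{d. d dvd g}. moebius_mu d) = (if g = 1 then 1 else 0)"
    using mu_sum[OF assms(2)] by simp
  finally show ?thesis .
qed

theorem corollary5p3:
  fixes A :: "nat set" and n \<alpha> \<beta> :: nat
  assumes "finite A" and "A \<noteq> {}" and "\<forall>a\<in>A. 0 < a"
    and "0 < n" and "0 < \<alpha>" and "\<alpha> \<le> \<beta>" and "\<beta> \<le> card A"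
  shows "(int (card A choose \<alpha>) = (\<Sum>d=1..Max A. moebius_mu d * int (v A d choose \<alpha>))
            \<longrightarrow> int (card A choose \<beta>) = (\<Sum>d=1..Max A. moebius_mu d * int (v A d choose \<beta>)))
       \<and> (int (card A choose \<alpha>) = (\<Sum>d\<in>{d. d dvd n}. moebius_mu d * int (v A d choose \<alpha>))
            \<longrightarrow> int (card A choose \<beta>) = (\<Sum>d\<in>{d. d dvd n}. moebius_mu d * int (v A d choose \<beta>)))
       \<and> ((\<Sum>d=1..Max A. moebius_mu d * int (v A d choose \<beta>)) = 0
            \<longrightarrow> (\<Sum>d=1..Max A. moebius_mu d * int (v A d choose \<alpha>)) = 0)
       \<and> ((\<Sum>d\<in>{d. d dvd n}. moebius_mu d * int (v A d choose \<beta>)) = 0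
            \<longrightarrow> (\<Sum>d\<in>{d. d dvd n}. moebius_mu d * int (v A d choose \<alpha>)) = 0)"
proof -
  note fA = assms(1) and pos = assms(3)
  define P1 :: "nat set \<Rightarrow> bool" where "P1 X = (Gcd X = 1)" for X
  define P2 :: "nat set \<Rightarrow> bool" where "P2 X = (gcd (Gcd X) n = 1)" for X
  have basic: "finite X \<and> 0 < Gcd X \<and> Gcd X \<le> Max A" if X: "X \<subseteq> A" "card X = k" "0 < k" for X k
  proof -
    have fX: "finite X" using X fA finite_subset by blast
    obtain x where x: "x \<in> X" using X by fastforce
    have xp: "0 < x" using x X pos by auto
    have "Gcd X dvd x" using x by (rule Gcd_dvd)
    then have "Gcd X \<le> x" using xp by (rule dvd_imp_le)
    moreover have "0 < Gcd X" using \<open>Gcd X dvd x\<close> xp by (intro Nat.gr0I) auto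
    moreover have "x \<le> Max A" using x X fA by auto
    ultimately show ?thesis using fX by simp
  qed
  have H1: "(\<Sum>d\<in>{1..Max A}. moebius_mu d * (if \<forall>x\<in>X. d dvd x then 1 else 0)) = (if P1 X then 1 else 0)"
    if X: "X \<subseteq> A" "card X = k" "0 < k" for X k
  proof -
    have b: "0 < Gcd X" "Gcd X \<le> Max A" using basic[OF X] by auto
    have "(\<Sum>d\<in>{1..Max A}. moebius_mu d * (if \<forall>x\<in>X. d dvd x then 1 else 0)) = (if Gcd X = 1 then 1 else 0)"
    proof (rule helper)
      show "finite {1..Max A}" by simp
      show "0 < Gcd X" using b by simp
      fix d
      assume "d dvd Gcd X"
      then have "d \<le> Gcd X" "d \<noteq> 0" using b(1) dvd_imp_le by auto
      then show "d \<in> {1..Max A}" using b(2) by simp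
    next
      fix d
      show "d \<in> {1..Max A} \<Longrightarrow> (\<forall>x\<in>X. d dvd x) \<longleftrightarrow> d dvd Gcd X"
        by (simp add: dvd_Gcd_iff)
    qed
    then show ?thesis by (simp add: P1_def)
  qed
  have H2: "(\<Sum>d\<in>{d. d dvd n}. moebius_mu d * (if \<forall>x\<in>X. d dvd x then 1 else 0)) = (if P2 X then 1 else 0)"
    if X: "X \<subseteq> A" "card X = k" "0 < k" for X k
  proof -
    have "(\<Sum>d\<in>{d. d dvd n}. moebius_mu d * (if \<forall>x\<in>X. d dvd x then 1 else 0)) = (if gcd (Gcd X) n = 1 then 1 else 0)"
    proof (rule helper)
      show "finite {d. d dvd n}" using assms(4) by simp
      show "0 < gcd (Gcd X) n" using assms(4) by simp
      fix d
      show "d dvd gcd (Gcd X) n \<Longrightarrow> d \<in> {d. d dvd n}" by simp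
      show "d \<in> {d. d dvd n} \<Longrightarrow> (\<forall>x\<in>X. d dvd x) \<longleftrightarrow> d dvd gcd (Gcd X) n"
        by (simp add: dvd_Gcd_iff)
    qed
    then show ?thesis by (simp add: P2_def)
  qed
  have fD2: "finite {d. d dvd n}" using assms(4) by simp
  have kpos: "0 < \<alpha>" "0 < \<beta>" using assms(5,6) by auto
  have C1: "(\<Sum>d=1..Max A. moebius_mu d * int (v A d choose k)) = int (card {X. X \<subseteq> A \<and> card X = k \<and> P1 X})"
    if "0 < k" for k
    by (rule count_lemma[OF fA finite_atLeastAtMost], rule H1[OF _ _ that])
  have C2: "(\<Sum>d\<in>{d. d dvd n}. moebius_mu d * int (v A d choose k)) = int (card {X. X \<subseteq> A \<and> card X = k \<and> P2 X})"
    if "0 < k" for k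
    by (rule count_lemma[OF fA fD2], rule H2[OF _ _ that])
  have mono1: "P1 Y" if "X \<subseteq> Y" "Y \<subseteq> A" "P1 X" for X Y
  proof -
    have "Gcd Y dvd Gcd X" using that(1) by (intro Gcd_greatest) (auto intro: Gcd_dvd)
    then show ?thesis using that(3) by (simp add: P1_def)
  qed
  have mono2: "P2 Y" if "X \<subseteq> Y" "Y \<subseteq> A" "P2 X" for X Y
  proof -
    have "Gcd Y dvd Gcd X" using that(1) by (intro Gcd_greatest) (auto intro: Gcd_dvd)
    then have "gcd (Gcd Y) n dvd gcd (Gcd X) n" by (meson dvd_trans gcd_dvd1 gcd_dvd2 gcd_greatest)
    then show ?thesis using that(3) unfolding P2_def by (metis nat_dvd_1_iff_1)
  qed
  have m1: "\<forall>X Y. X \<subseteq> Y \<longrightarrow> Y \<subseteq> A \<longrightarrow> P1 X \<longrightarrow> P1 Y" using mono1 by blast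
  have m2: "\<forall>X Y. X \<subseteq> Y \<longrightarrow> Y \<subseteq> A \<longrightarrow> P2 X \<longrightarrow> P2 Y" using mono2 by blast
  note F1 = final_lemma[OF fA assms(6,7) m1]
  note F2 = final_lemma[OF fA assms(6,7) m2]
  show ?thesis
    unfolding C1[OF kpos(1)] C1[OF kpos(2)] C2[OF kpos(1)] C2[OF kpos(2)]
    using F1 F2 by (simp only: of_nat_eq_iff of_nat_eq_0_iff eq_commute[of "card A choose \<alpha>"] eq_commute[of "card A choose \<beta>"]) blast
qed

end
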